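(* Let $X,Y,Z$ be irreducible sofic shifts and $\Phi:X\to Y$, $\Psi:Y\to Z$ factor maps. If $\Psi\circ\Phi:X\to Z$ is right-continuing almost-everywhere with some retract, then $\Psi$ is right-continuing almost-everywhere with some retract.
   Context: Subshifts are closed shift-invariant subsets of $A^{\mathbb Z}$, $A$ finite, with shift $\sigma(x)_i=x_{i+1}$; a factor map is a continuous, shift-commuting, onto map. A point $y\in Y$ is left-transitive in $Y$ if $\{\sigma^i(y): i\le 0\}$ is dense in $Y$. For an integer $n\ge0$, a factor map $f:X\to Y$ is right-continuing almost-everywhere with retract $n$ if for every $x\in X$ and every left-transitive $y\in Y$ with $f(x)_i=y_i$ for all $i\le n$, there exists $x'\in X$ with $x'_i=x_i$ for all $i\le 0$ and $f(x')=y$; "with some retract" means this holds for some $n\ge0$. *)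

theory Defs
  imports Main
begin

text \<open>The topology is the product topology (discrete alphabet); convergence/continuity
  is expressed via agreement on central windows [-n,n].\<close>

definition shift :: "(int \<Rightarrow> 'a) \<Rightarrow> int \<Rightarrow> 'a" where
  "shift x = (\<lambda>i. x (i + 1))"

definition shift_pow :: "int \<Rightarrow> (int \<Rightarrow> 'a) \<Rightarrow> int \<Rightarrow> 'a" where
  "shift_pow k x = (\<lambda>i. x (i + k))"

definition agree_on_window :: "nat \<Rightarrow> (int \<Rightarrow> 'a) \<Rightarrow> (int \<Rightarrow> 'a) \<Rightarrow> bool" where
  "agree_on_window n x y \<longleftrightarrow> (\<forall>i. \<bar>i\<bar> \<le> int n \<longrightarrow> x i = y i)"

definition closed_shift_set :: "(int \<Rightarrow> 'a) set \<Rightarrow> bool" where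
  "closed_shift_set X \<longleftrightarrow>
     (\<forall>x. (\<forall>n. \<exists>x'\<in>X. agree_on_window n x x') \<longrightarrow> x \<in> X)"

definition subshift :: "(int \<Rightarrow> 'a::finite) set \<Rightarrow> bool" where
  "subshift X \<longleftrightarrow> closed_shift_set X \<and> shift ` X = X"

text \<open>Sofic shift: the set of label sequences of bi-infinite walks in a finite
  labelled graph (vertices are naturals, edges (u, label, v)).\<close>
definition sofic :: "(int \<Rightarrow> 'a::finite) set \<Rightarrow> bool" where
  "sofic X \<longleftrightarrow> (\<exists>E :: (nat \<times> 'a \<times> nat) set. finite E \<and>
     X = {x. \<exists>v :: int \<Rightarrow> nat. \<forall>i. (v i, x i, v (i + 1)) \<in> E})"

definition occurs_in :: "'a list \<Rightarrow> (int \<Rightarrow> 'a) \<Rightarrow> bool" where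
  "occurs_in w x \<longleftrightarrow> (\<exists>i. \<forall>k < length w. x (i + int k) = w ! k)"

definition language :: "(int \<Rightarrow> 'a) set \<Rightarrow> 'a list set" where
  "language X = {w. \<exists>x\<in>X. occurs_in w x}"

definition irreducible_shift :: "(int \<Rightarrow> 'a) set \<Rightarrow> bool" where
  "irreducible_shift X \<longleftrightarrow>
     (\<forall>u\<in>language X. \<forall>w\<in>language X. \<exists>v. u @ v @ w \<in> language X)"

definition shift_continuous_on ::
  "(int \<Rightarrow> 'a) set \<Rightarrow> ((int \<Rightarrow> 'a) \<Rightarrow> (int \<Rightarrow> 'b)) \<Rightarrow> bool" where
  "shift_continuous_on X f \<longleftrightarrow>
     (\<forall>x\<in>X. \<forall>n. \<exists>m. \<forall>x'\<in>X. agree_on_window m x x' \<longrightarrow> agree_on_window n (f x) (f x'))"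

definition factor_map ::
  "(int \<Rightarrow> 'a) set \<Rightarrow> (int \<Rightarrow> 'b) set \<Rightarrow> ((int \<Rightarrow> 'a) \<Rightarrow> (int \<Rightarrow> 'b)) \<Rightarrow> bool" where
  "factor_map X Y f \<longleftrightarrow>
     shift_continuous_on X f \<and> (\<forall>x\<in>X. f (shift x) = shift (f x)) \<and> f ` X = Y"

definition left_transitive :: "(int \<Rightarrow> 'b) set \<Rightarrow> (int \<Rightarrow> 'b) \<Rightarrow> bool" where
  "left_transitive Y y \<longleftrightarrow> y \<in> Y \<and>
     (\<forall>y'\<in>Y. \<forall>n. \<exists>i \<le> 0. agree_on_window n (shift_pow i y) y')"

definition rcae_retract ::
  "nat \<Rightarrow> (int \<Rightarrow> 'a) set \<Rightarrow> (int \<Rightarrow> 'b) set \<Rightarrow> ((int \<Rightarrow> 'a) \<Rightarrow> (int \<Rightarrow> 'b)) \<Rightarrow> bool" where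
  "rcae_retract n X Y f \<longleftrightarrow>
     (\<forall>x\<in>X. \<forall>y. left_transitive Y y \<and> (\<forall>i \<le> int n. f x i = y i) \<longrightarrow>
        (\<exists>x'\<in>X. (\<forall>i \<le> 0. x' i = x i) \<and> f x' = y))"

definition rcae ::
  "(int \<Rightarrow> 'a) set \<Rightarrow> (int \<Rightarrow> 'b) set \<Rightarrow> ((int \<Rightarrow> 'a) \<Rightarrow> (int \<Rightarrow> 'b)) \<Rightarrow> bool" where
  "rcae X Y f \<longleftrightarrow> (\<exists>n. rcae_retract n X Y f)"

end

theory Submission
  imports Defs "HOL-Library.Infinite_Set"
begin

lemma shift_pow_shift_pow: "shift_pow j (shift_pow k x) = shift_pow (j+k) x"
  by (rule ext) (simp add: shift_pow_def algebra_simps)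

lemma shift_pow_0[simp]: "shift_pow 0 x = x"
  by (simp add: shift_pow_def)

lemma shift_pow_Suc: "shift_pow (int (Suc k)) w = shift (shift_pow (int k) w)"
  by (rule ext) (simp add: shift_pow_def shift_def algebra_simps)

lemma shift_pow_inv: "shift_pow (-1) (shift v) = v"
  by (rule ext) (simp add: shift_pow_def shift_def)

lemma pow_pos:
  assumes inv: "shift ` X = X" and comm: "\<forall>x\<in>X. f (shift x) = shift (f x)" and x: "x \<in> X"
  shows "shift_pow (int k) x \<in> X \<and> f (shift_pow (int k) x) = shift_pow (int k) (f x)"
proof (induction k)
  case 0 then show ?case using x by simp
next
  case (Suc k)
  let ?w = "shift_pow (int k) x"
  have "shift ?w \<in> X" using Suc inv by blast
  moreover have "f (shift ?w) = shift (f ?w)" using comm Suc by blast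
  ultimately show ?case unfolding shift_pow_Suc using Suc by simp
qed

lemma pow_neg:
  assumes inv: "shift ` X = X" and comm: "\<forall>x\<in>X. f (shift x) = shift (f x)" and x: "x \<in> X"
  shows "shift_pow (- int k) x \<in> X \<and> f (shift_pow (- int k) x) = shift_pow (- int k) (f x)"
proof (induction k)
  case 0 then show ?case using x by simp
next
  case (Suc k)
  let ?w = "shift_pow (- int k) x"
  have "?w \<in> shift ` X" using Suc inv by simp
  then obtain u where u: "u \<in> X" "?w = shift u" by blast
  have e1: "shift_pow (- int (Suc k)) x = shift_pow (-1) ?w"
    by (simp add: shift_pow_shift_pow)
  have e2: "shift_pow (- int (Suc k)) (f x) = shift_pow (-1) (shift_pow (- int k) (f x))"
    by (simp add: shift_pow_shift_pow)
  have "f ?w = shift (f u)" using u comm by simp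
  hence "f u = shift_pow (-1) (f ?w)" by (simp add: shift_pow_inv)
  moreover have "shift_pow (-1) ?w = u" using u by (simp add: shift_pow_inv)
  ultimately show ?case using Suc u e1 e2 by simp
qed

lemma pow_all:
  assumes inv: "shift ` X = X" and comm: "\<forall>x\<in>X. f (shift x) = shift (f x)" and x: "x \<in> X"
  shows "shift_pow j x \<in> X \<and> f (shift_pow j x) = shift_pow j (f x)"
proof (cases "j \<ge> 0")
  case True
  then obtain k where "j = int k" using nonneg_int_cases by blast
  then show ?thesis using pow_pos[OF assms, of k] by simp
next
  case False
  then have "j = - int (nat (-j))" by simp
  then obtain k where "j = - int k" by blast
  then show ?thesis using pow_neg[OF assms, of k] by simp
qed

lemma compact_seq:
  fixes s :: "nat \<Rightarrow> int \<Rightarrow> 'a::finite"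
  shows "\<exists>x. \<forall>m N. \<exists>k\<ge>N. agree_on_window m x (s k)"
proof -
  define key where "key m k = map (\<lambda>j. s k (int j - int m)) [0..<2*m+1]" for m k
  have keyagree: "agree_on_window m (s k) (s k')" if "key m k = key m k'" for m k k'
    unfolding agree_on_window_def
  proof (intro allI impI)
    fix i assume i: "\<bar>i\<bar> \<le> int m"
    define j where "j = nat (i + int m)"
    have j: "j < 2*m+1" "int j - int m = i" using i by (auto simp: j_def)
    have "key m k ! j = s k i" "key m k' ! j = s k' i" using j by (simp_all del: upt_Suc add: key_def)
    then show "s k i = s k' i" using that by simp
  qed
  have fin: "finite (key m ` A)" for m A
  proof (rule finite_subset)
    show "key m ` A \<subseteq> {xs. set xs \<subseteq> UNIV \<and> length xs = 2*m+1}" by (auto simp: key_def)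
    show "finite {xs. set xs \<subseteq> (UNIV::'a set) \<and> length xs = 2*m+1}"
      by (rule finite_lists_length_eq) simp
  qed
  have step: "\<exists>B. B \<subseteq> A \<and> infinite B \<and> (\<forall>k\<in>B. \<forall>k'\<in>B. key m k = key m k')"
    if infA: "infinite A" for A m
  proof -
    obtain y where "y \<in> key m ` A" "infinite (key m -` {y} \<inter> A)"
      using inf_img_fin_domE'[OF fin[of m A] infA] by blast
    then show ?thesis by (intro exI[of _ "key m -` {y} \<inter> A"]) auto
  qed
  define refine where "refine A m = (SOME B. B \<subseteq> A \<and> infinite B \<and> (\<forall>k\<in>B. \<forall>k'\<in>B. key m k = key m k'))" for A m
  have ref: "refine A m \<subseteq> A \<and> infinite (refine A m) \<and> (\<forall>k\<in>refine A m. \<forall>k'\<in>refine A m. key m k = key m k')"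
    if "infinite A" for A m
    unfolding refine_def by (rule someI_ex[OF step[OF that]])
  define S where "S = rec_nat (refine UNIV 0) (\<lambda>m T. refine T (Suc m))"
  have S0: "S 0 = refine UNIV 0" and SSuc: "S (Suc m) = refine (S m) (Suc m)" for m
    by (simp_all add: S_def)
  have Sprop: "infinite (S m) \<and> (\<forall>k\<in>S m. \<forall>k'\<in>S m. key m k = key m k')" for m
  proof (induction m)
    case 0
    have "infinite (UNIV :: nat set)" by simp
    from ref[OF this, of 0] show ?case unfolding S0 by blast
  next
    case (Suc m)
    from Suc have "infinite (S m)" by blast
    from ref[OF this, of "Suc m"] show ?case unfolding SSuc by blast
  qed
  have Smono: "S (m + d) \<subseteq> S m" for m d
  proof (induction d)
    case 0 show ?case by simp
  next
    case (Suc d)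
    have "infinite (S (m + d))" using Sprop by blast
    from ref[OF this, of "Suc (m+d)"] have "S (Suc (m + d)) \<subseteq> S (m + d)" unfolding SSuc by blast
    then show ?case using Suc by simp
  qed
  define x where "x i = s (SOME k. k \<in> S (nat \<bar>i\<bar>)) i" for i
  show ?thesis
  proof (rule exI[of _ x], intro allI)
    fix m N
    have "infinite (S m)" using Sprop by blast
    then obtain k where k: "k \<in> S m" "k \<ge> N" using infinite_nat_iff_unbounded_le by blast
    have "agree_on_window m x (s k)" unfolding agree_on_window_def
    proof (intro allI impI)
      fix i assume i: "\<bar>i\<bar> \<le> int m"
      let ?p = "nat \<bar>i\<bar>"
      have "m = ?p + (m - ?p)" using i by simp
      then have kp: "k \<in> S ?p" using Smono[of ?p "m - ?p"] k by auto
      then have "\<exists>k. k \<in> S ?p" by blast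
      then have k0: "(SOME k. k \<in> S ?p) \<in> S ?p" by (rule someI_ex)
      have "key ?p (SOME k. k \<in> S ?p) = key ?p k" using Sprop k0 kp by blast
      then have "agree_on_window ?p (s (SOME k. k \<in> S ?p)) (s k)" by (rule keyagree)
      then show "x i = s k i" unfolding agree_on_window_def x_def by simp
    qed
    then show "\<exists>k\<ge>N. agree_on_window m x (s k)" using k by blast
  qed
qed

lemma unif:
  fixes X :: "(int \<Rightarrow> 'a::finite) set"
  assumes cl: "closed_shift_set X" and cont: "shift_continuous_on X f"
  shows "\<exists>a. \<forall>x\<in>X. \<forall>x'\<in>X. agree_on_window a x x' \<longrightarrow> f x 0 = f x' 0"
proof (rule ccontr)
  assume "\<not> ?thesis"
  then have ex: "\<forall>a. \<exists>x\<in>X. \<exists>x'\<in>X. agree_on_window a x x' \<and> f x 0 \<noteq> f x' 0" by simp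
  have ex2: "\<forall>a. \<exists>p. fst p \<in> X \<and> snd p \<in> X \<and> agree_on_window a (fst p) (snd p) \<and> f (fst p) 0 \<noteq> f (snd p) 0"
  proof
    fix a
    obtain x x' where "x \<in> X" "x' \<in> X" "agree_on_window a x x'" "f x 0 \<noteq> f x' 0" using ex by blast
    then show "\<exists>p. fst p \<in> X \<and> snd p \<in> X \<and> agree_on_window a (fst p) (snd p) \<and> f (fst p) 0 \<noteq> f (snd p) 0"
      by (intro exI[of _ "(x, x')"]) simp
  qed
  then obtain P where P: "\<forall>a. fst (P a) \<in> X \<and> snd (P a) \<in> X \<and> agree_on_window a (fst (P a)) (snd (P a)) \<and> f (fst (P a)) 0 \<noteq> f (snd (P a)) 0"
    using choice[OF ex2] by blast
  define s where "s a = fst (P a)" for a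
  define t where "t a = snd (P a)" for a
  obtain x where x: "\<forall>m N. \<exists>k\<ge>N. agree_on_window m x (s k)" using compact_seq by blast
  have tX: "t k \<in> X" and sX: "s k \<in> X" for k unfolding s_def t_def using P by simp_all
  have "\<forall>n. \<exists>x'\<in>X. agree_on_window n x x'"
  proof
    fix n
    obtain k where "agree_on_window n x (s k)" using x by blast
    then show "\<exists>x'\<in>X. agree_on_window n x x'" using sX by blast
  qed
  then have "x \<in> X" using cl unfolding closed_shift_set_def by blast
  then obtain m where m: "\<forall>x'\<in>X. agree_on_window m x x' \<longrightarrow> agree_on_window 0 (f x) (f x')"
    using cont unfolding shift_continuous_on_def by blast
  obtain k where k: "k \<ge> m" "agree_on_window m x (s k)" using x by blast
  have st: "agree_on_window k (s k) (t k)" unfolding s_def t_def using P by simp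
  have "agree_on_window m x (t k)" unfolding agree_on_window_def
  proof (intro allI impI)
    fix i :: int assume i: "\<bar>i\<bar> \<le> int m"
    have "x i = s k i" using k(2) i unfolding agree_on_window_def by blast
    moreover have "s k i = t k i" using st i k(1) unfolding agree_on_window_def by simp
    ultimately show "x i = t k i" by simp
  qed
  then have "agree_on_window 0 (f x) (f (t k))" using m tX by blast
  then have e1: "f x 0 = f (t k) 0" unfolding agree_on_window_def by simp
  have "agree_on_window 0 (f x) (f (s k))" using m sX k(2) by blast
  then have e2: "f x 0 = f (s k) 0" unfolding agree_on_window_def by simp
  have "f (s k) 0 \<noteq> f (t k) 0" using P s_def t_def by simp
  then show False using e1 e2 by simp
qed

theorem mainTheorem5:
  fixes X :: "(int \<Rightarrow> 'a::finite) set" and Y :: "(int \<Rightarrow> 'b::finite) set"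
    and Z :: "(int \<Rightarrow> 'c::finite) set"
    and \<Phi> :: "(int \<Rightarrow> 'a) \<Rightarrow> (int \<Rightarrow> 'b)" and \<Psi> :: "(int \<Rightarrow> 'b) \<Rightarrow> (int \<Rightarrow> 'c)"
  assumes "subshift X" "sofic X" "irreducible_shift X"
    and "subshift Y" "sofic Y" "irreducible_shift Y"
    and "subshift Z" "sofic Z" "irreducible_shift Z"
    and "factor_map X Y \<Phi>" and "factor_map Y Z \<Psi>"
    and "rcae X Z (\<Psi> \<circ> \<Phi>)"
  shows "rcae Y Z \<Psi>"
proof -
  have clX: "closed_shift_set X" and invX: "shift ` X = X" using assms(1) by (auto simp: subshift_def)
  have invY: "shift ` Y = Y" using assms(4) by (auto simp: subshift_def)
  have invZ: "shift ` Z = Z" using assms(7) by (auto simp: subshift_def)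
  have contP: "shift_continuous_on X \<Phi>" and commP: "\<forall>x\<in>X. \<Phi> (shift x) = shift (\<Phi> x)"
    and ontoP: "\<Phi> ` X = Y" using assms(10) by (auto simp: factor_map_def)
  have commQ: "\<forall>y\<in>Y. \<Psi> (shift y) = shift (\<Psi> y)"
    using assms(11) by (auto simp: factor_map_def)
  obtain n where n: "rcae_retract n X Z (\<Psi> \<circ> \<Phi>)" using assms(12) by (auto simp: rcae_def)
  obtain a where a: "\<forall>x\<in>X. \<forall>x'\<in>X. agree_on_window a x x' \<longrightarrow> \<Phi> x 0 = \<Phi> x' 0"
    using unif[OF clX contP] by blast
  have memX: "shift_pow j x \<in> X" if "x \<in> X" for x j using pow_all[OF invX commP that] by blast
  have cP: "\<Phi> (shift_pow j x) = shift_pow j (\<Phi> x)" if "x \<in> X" for x j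
    using pow_all[OF invX commP that] by blast
  have cQ: "\<Psi> (shift_pow j y) = shift_pow j (\<Psi> y)" if "y \<in> Y" for y j
    using pow_all[OF invY commQ that] by blast
  have memZ: "shift_pow j z \<in> Z" if "z \<in> Z" for z j
    using pow_all[OF invZ _ that, of id] by simp
  have loc: "\<Phi> x' i = \<Phi> x i" if "x \<in> X" "x' \<in> X" "\<forall>l \<le> int a. x' l = x l" "i \<le> 0" for x x' i
  proof -
    have "agree_on_window a (shift_pow i x) (shift_pow i x')"
      using that unfolding agree_on_window_def shift_pow_def by auto
    then have "\<Phi> (shift_pow i x) 0 = \<Phi> (shift_pow i x') 0" using a memX that by blast
    then show ?thesis using cP that by (simp add: shift_pow_def)
  qed
  have "rcae_retract (n + a) Y Z \<Psi>" unfolding rcae_retract_def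
  proof (intro ballI allI impI)
    fix y z assume y: "y \<in> Y" and hz: "left_transitive Z z \<and> (\<forall>i\<le>int (n + a). \<Psi> y i = z i)"
    obtain x where x: "x \<in> X" "\<Phi> x = y" using ontoP y by blast
    define xt where "xt = shift_pow (int a) x"
    define zt where "zt = shift_pow (int a) z"
    have xtX: "xt \<in> X" using memX x xt_def by simp
    have zZ: "z \<in> Z" using hz by (simp add: left_transitive_def)
    have ltz: "left_transitive Z zt" unfolding left_transitive_def
    proof (intro conjI ballI allI)
      show "zt \<in> Z" using memZ zZ zt_def by simp
      fix y' n' assume "y' \<in> Z"
      then obtain i where "i \<le> 0" "agree_on_window n' (shift_pow i z) y'"
        using hz unfolding left_transitive_def by blast
      moreover have "shift_pow (i - int a) zt = shift_pow i z"
        by (simp add: zt_def shift_pow_shift_pow)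
      ultimately show "\<exists>i\<le>0. agree_on_window n' (shift_pow i zt) y'"
        by (intro exI[of _ "i - int a"]) auto
    qed
    have "(\<Psi> \<circ> \<Phi>) xt = shift_pow (int a) (\<Psi> y)"
      using x cP cQ y xt_def by simp
    then have "\<forall>i\<le>int n. (\<Psi> \<circ> \<Phi>) xt i = zt i"
      using hz by (auto simp: shift_pow_def zt_def)
    then obtain xt' where xt': "xt' \<in> X" "\<forall>i\<le>0. xt' i = xt i" "(\<Psi> \<circ> \<Phi>) xt' = zt"
      using n xtX ltz unfolding rcae_retract_def by blast
    define x' where "x' = shift_pow (- int a) xt'"
    have x'X: "x' \<in> X" using memX xt' x'_def by simp
    have agr: "\<forall>l \<le> int a. x' l = x l"
    proof (intro allI impI)
      fix l :: int assume "l \<le> int a"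
      then have "xt' (l - int a) = xt (l - int a)" using xt' by simp
      then show "x' l = x l" by (simp add: x'_def xt_def shift_pow_def)
    qed
    have PX: "\<Phi> xt' \<in> Y" using ontoP xt' by blast
    have "\<Psi> (\<Phi> x') = shift_pow (- int a) (\<Psi> (\<Phi> xt'))"
      using cP cQ xt' PX x'_def by simp
    also have "\<dots> = z" using xt' by (simp add: zt_def shift_pow_shift_pow)
    finally have "\<Psi> (\<Phi> x') = z" .
    moreover have "\<forall>i\<le>0. \<Phi> x' i = y i" using loc[OF x(1) x'X agr] x by simp
    moreover have "\<Phi> x' \<in> Y" using ontoP x'X by blast
    ultimately show "\<exists>y'\<in>Y. (\<forall>i\<le>0. y' i = y i) \<and> \<Psi> y' = z" by blast
  qed
  then show ?thesis unfolding rcae_def by blast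
qed

end
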